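(* Let $I$ and $J$ be componentwise polymatroidal monomial ideals in $K[x,y]$. Then $IJ$ is also componentwise polymatroidal. In particular, all powers of a componentwise polymatroidal ideal in $K[x,y]$ are componentwise polymatroidal.
   Context: $G(I)$ is the minimal monomial generating set. A monomial ideal generated in a single degree is polymatroidal if for all $u,v\in G(I)$ and all variables $z$ with $\deg_{z}(u)>\deg_{z}(v)$ ($\deg_z$ = exponent of $z$) there exists a variable $w$ with $\deg_{w}(u)<\deg_{w}(v)$ and $w(u/z)\in I$. $I_{\langle j\rangle}$ is the ideal generated by all degree-$j$ monomials of $I$; $I$ is componentwise polymatroidal if every nonzero $I_{\langle j\rangle}$ is polymatroidal. *)

theory Defs
  imports Main
begin

text \<open>Monomials of K[x,y] are identified with their exponent vectors
  (functions from the two variables to nat). A monomial ideal of K[x,y] is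
  determined by the set of monomials it contains; this set is closed under
  multiplication by arbitrary monomials (upward closed for divisibility).\<close>

datatype var = X | Y

type_synonym mon = "var \<Rightarrow> nat"

definition mdeg :: "mon \<Rightarrow> nat" where
  "mdeg u = u X + u Y"

definition mdvd :: "mon \<Rightarrow> mon \<Rightarrow> bool" where
  "mdvd u w \<longleftrightarrow> (\<forall>z. u z \<le> w z)"

definition mmult :: "mon \<Rightarrow> mon \<Rightarrow> mon" where
  "mmult u v = (\<lambda>z. u z + v z)"

definition mon_ideal :: "mon set \<Rightarrow> bool" where
  "mon_ideal I \<longleftrightarrow> (\<forall>u\<in>I. \<forall>w. mdvd u w \<longrightarrow> w \<in> I)"

definition gens :: "mon set \<Rightarrow> mon set" where
  "gens I = {u \<in> I. \<forall>v\<in>I. mdvd v u \<longrightarrow> v = u}"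

definition mulvar :: "var \<Rightarrow> mon \<Rightarrow> mon" where
  "mulvar w u = u(w := u w + 1)"

definition divvar :: "var \<Rightarrow> mon \<Rightarrow> mon" where
  "divvar z u = u(z := u z - 1)"

definition polymatroidal :: "mon set \<Rightarrow> bool" where
  "polymatroidal I \<longleftrightarrow>
     (\<exists>d. \<forall>u\<in>gens I. mdeg u = d) \<and>
     (\<forall>u\<in>gens I. \<forall>v\<in>gens I. \<forall>z. u z > v z \<longrightarrow>
        (\<exists>w. u w < v w \<and> mulvar w (divvar z u) \<in> I))"

definition comp :: "mon set \<Rightarrow> nat \<Rightarrow> mon set" where
  "comp I j = {w. \<exists>u\<in>I. mdeg u = j \<and> mdvd u w}"

definition cw_polymatroidal :: "mon set \<Rightarrow> bool" where
  "cw_polymatroidal I \<longleftrightarrow> (\<forall>j. comp I j \<noteq> {} \<longrightarrow> polymatroidal (comp I j))"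

definition mprod :: "mon set \<Rightarrow> mon set \<Rightarrow> mon set" where
  "mprod I J = {w. \<exists>u\<in>I. \<exists>v\<in>J. mdvd (mmult u v) w}"

primrec mpow :: "mon set \<Rightarrow> nat \<Rightarrow> mon set" where
  "mpow I 0 = UNIV"
| "mpow I (Suc n) = mprod I (mpow I n)"

end

theory Submission
  imports Defs
begin

definition betw :: "nat \<Rightarrow> nat \<Rightarrow> nat \<Rightarrow> bool" where
  "betw a b c \<longleftrightarrow> (a \<le> b \<and> b \<le> c) \<or> (c \<le> b \<and> b \<le> a)"

definition stepX :: "mon set \<Rightarrow> bool" where
  "stepX I \<longleftrightarrow> (\<forall>u\<in>I. \<forall>v\<in>I. mdeg u = mdeg v \<longrightarrow> v X < u X \<longrightarrow> mulvar Y (divvar X u) \<in> I)"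

definition convX :: "mon set \<Rightarrow> bool" where
  "convX I \<longleftrightarrow> (\<forall>u\<in>I. \<forall>v\<in>I. \<forall>w. mdeg u = mdeg w \<longrightarrow> mdeg v = mdeg w \<longrightarrow>
      betw (u X) (w X) (v X) \<longrightarrow> w \<in> I)"

lemma mon_eq: "f X = g X \<Longrightarrow> f Y = g Y \<Longrightarrow> f = (g::mon)"
  by (rule ext, case_tac x) auto

lemma mdvd_deg: "mdvd u w \<Longrightarrow> mdeg u \<le> mdeg w"
  unfolding mdvd_def mdeg_def by (metis add_mono)

lemma mdvd_deg_eq: "mdvd u w \<Longrightarrow> mdeg u = mdeg w \<Longrightarrow> u = w"
  unfolding mdvd_def mdeg_def
  by (rule mon_eq) (metis add_le_cancel_left add_le_cancel_right le_antisym)+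

lemma mdvd_refl: "mdvd u u" unfolding mdvd_def by auto

lemma comp_deg: "w \<in> comp I j \<Longrightarrow> mdeg w = j \<Longrightarrow> w \<in> I"
proof -
  assume "w \<in> comp I j" "mdeg w = j"
  then obtain u where "u \<in> I" "mdeg u = j" "mdvd u w" unfolding comp_def by auto
  then show "w \<in> I" using mdvd_deg_eq \<open>mdeg w = j\<close> by metis
qed

lemma gens_comp1: "u \<in> gens (comp I j) \<Longrightarrow> u \<in> I \<and> mdeg u = j"
proof -
  assume a: "u \<in> gens (comp I j)"
  then have uc: "u \<in> comp I j" and m: "\<forall>v\<in>comp I j. mdvd v u \<longrightarrow> v = u"
    unfolding gens_def by auto
  then obtain u0 where "u0 \<in> I" "mdeg u0 = j" "mdvd u0 u" unfolding comp_def by auto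
  moreover then have "u0 \<in> comp I j" unfolding comp_def using mdvd_refl by auto
  ultimately show ?thesis using m by auto
qed

lemma gens_comp2: "u \<in> I \<Longrightarrow> mdeg u = j \<Longrightarrow> u \<in> gens (comp I j)"
proof -
  assume a: "u \<in> I" "mdeg u = j"
  have "u \<in> comp I j" unfolding comp_def using a mdvd_refl by auto
  moreover have "\<forall>v\<in>comp I j. mdvd v u \<longrightarrow> v = u"
  proof (intro ballI impI)
    fix v assume "v \<in> comp I j" "mdvd v u"
    then obtain u0 where "mdvd u0 v" "mdeg u0 = j" unfolding comp_def by auto
    with \<open>mdvd v u\<close> a show "v = u"
      by (metis mdvd_deg mdvd_deg_eq le_antisym)
  qed
  ultimately show ?thesis unfolding gens_def by auto
qed

lemma cw_stepX: "cw_polymatroidal I \<Longrightarrow> stepX I"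
  unfolding stepX_def
proof (intro ballI impI)
  fix u v assume cw: "cw_polymatroidal I" and uv: "u \<in> I" "v \<in> I" "mdeg u = mdeg v" "v X < u X"
  let ?j = "mdeg u"
  have gu: "u \<in> gens (comp I ?j)" and gv: "v \<in> gens (comp I ?j)"
    using gens_comp2 uv by auto
  have "comp I ?j \<noteq> {}" using gu unfolding gens_def by auto
  with cw have "polymatroidal (comp I ?j)" unfolding cw_polymatroidal_def by auto
  then obtain w where w: "u w < v w" "mulvar w (divvar X u) \<in> comp I ?j"
    using gu gv uv(4) unfolding polymatroidal_def by blast
  have "w \<noteq> X" using w uv by auto
  then have "w = Y" by (cases w) auto
  moreover have "mdeg (mulvar Y (divvar X u)) = ?j"
    using uv(4) unfolding mdeg_def mulvar_def divvar_def by auto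
  ultimately show "mulvar Y (divvar X u) \<in> I" using w comp_deg by blast
qed

lemma convX_cw: "convX I \<Longrightarrow> cw_polymatroidal I"
  unfolding cw_polymatroidal_def
proof (intro allI impI)
  fix j assume c: "convX I" and ne: "comp I j \<noteq> {}"
  show "polymatroidal (comp I j)"
    unfolding polymatroidal_def
  proof (intro conjI ballI allI impI)
    show "\<exists>d. \<forall>u\<in>gens (comp I j). mdeg u = d" using gens_comp1 by blast
  next
    fix u v z assume gu: "u \<in> gens (comp I j)" and gv: "v \<in> gens (comp I j)" and lt: "v z < u z"
    have u: "u \<in> I" "mdeg u = j" and v: "v \<in> I" "mdeg v = j" using gu gv gens_comp1 by auto
    show "\<exists>w. u w < v w \<and> mulvar w (divvar z u) \<in> comp I j"
    proof (cases z)
      case X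
      let ?m = "mulvar Y (divvar X u)"
      have d: "mdeg ?m = j" using lt X u unfolding mdeg_def mulvar_def divvar_def by auto
      have "betw (u X) (?m X) (v X)" using lt X unfolding betw_def mulvar_def divvar_def by auto
      then have "?m \<in> I" using c u v d unfolding convX_def by metis
      then have "?m \<in> comp I j" unfolding comp_def using d mdvd_refl by auto
      moreover have "u Y < v Y" using u v lt X unfolding mdeg_def by auto
      ultimately show ?thesis using X by auto
    next
      case Y
      let ?m = "mulvar X (divvar Y u)"
      have d: "mdeg ?m = j" using lt Y u unfolding mdeg_def mulvar_def divvar_def by auto
      have "betw (u X) (?m X) (v X)" using lt Y u v unfolding betw_def mulvar_def divvar_def mdeg_def by auto
      then have "?m \<in> I" using c u v d unfolding convX_def by metis
      then have "?m \<in> comp I j" unfolding comp_def using d mdvd_refl by auto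
      moreover have "u X < v X" using u v lt Y unfolding mdeg_def by auto
      ultimately show ?thesis using Y by auto
    qed
  qed
qed

lemma mprod_char: "mon_ideal I \<Longrightarrow> w \<in> mprod I J \<longleftrightarrow> (\<exists>u\<in>I. \<exists>v\<in>J. w = mmult u v)"
proof
  assume mi: "mon_ideal I" and "w \<in> mprod I J"
  then obtain u v where uv: "u \<in> I" "v \<in> J" "mdvd (mmult u v) w" unfolding mprod_def by auto
  let ?u = "\<lambda>z. w z - v z"
  have "mdvd u ?u" using uv(3) unfolding mdvd_def mmult_def by (auto intro: add_le_imp_le_diff)
  then have "?u \<in> I" using mi uv(1) unfolding mon_ideal_def by auto
  moreover have "w = mmult ?u v" using uv(3) unfolding mdvd_def mmult_def
    by (intro ext) (metis add_leD2 le_add_diff_inverse2)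
  ultimately show "\<exists>u\<in>I. \<exists>v\<in>J. w = mmult u v" using uv by auto
next
  assume "\<exists>u\<in>I. \<exists>v\<in>J. w = mmult u v"
  then show "w \<in> mprod I J" unfolding mprod_def using mdvd_refl by auto
qed

lemma mprod_ideal: "mon_ideal (mprod I J)"
  unfolding mon_ideal_def mprod_def mdvd_def by (auto, meson order_trans)

lemma base_ord:
  assumes sI: "stepX I" and sJ: "stepX J"
  shows "u1\<in>I \<Longrightarrow> v1\<in>J \<Longrightarrow> u2\<in>I \<Longrightarrow> v2\<in>J \<Longrightarrow> mdeg u1 = mdeg u2 \<Longrightarrow> mdeg v1 = mdeg v2
   \<Longrightarrow> mdeg w = mdeg u1 + mdeg v1 \<Longrightarrow> u1 X + v1 X \<le> w X \<Longrightarrow> w X \<le> u2 X + v2 X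
   \<Longrightarrow> g = u2 X + v2 X - w X
   \<Longrightarrow> \<exists>u\<in>I. \<exists>v\<in>J. mdeg u = mdeg u1 \<and> w = mmult u v"
proof (induction g arbitrary: u2 v2)
  case 0
  then have "w = mmult u2 v2"
    by (intro mon_eq) (auto simp: mmult_def mdeg_def)
  then show ?case using 0 by auto
next
  case (Suc g)
  show ?case
  proof (cases "u1 X < u2 X")
    case True
    let ?u = "mulvar Y (divvar X u2)"
    have "?u \<in> I" using sI Suc.prems True unfolding stepX_def by auto
    moreover have "mdeg ?u = mdeg u2" "?u X = u2 X - 1"
      using True unfolding mdeg_def mulvar_def divvar_def by auto
    ultimately show ?thesis using Suc.IH[of ?u v2] Suc.prems True by auto
  next
    case False
    then have T: "v1 X < v2 X" using Suc.prems by auto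
    let ?v = "mulvar Y (divvar X v2)"
    have "?v \<in> J" using sJ Suc.prems T unfolding stepX_def by auto
    moreover have "mdeg ?v = mdeg v2" "?v X = v2 X - 1"
      using T unfolding mdeg_def mulvar_def divvar_def by auto
    ultimately show ?thesis using Suc.IH[of u2 ?v] Suc.prems T by auto
  qed
qed

lemma base:
  assumes "stepX I" "stepX J" "u1\<in>I" "v1\<in>J" "u2\<in>I" "v2\<in>J" "mdeg u1 = mdeg u2" "mdeg v1 = mdeg v2"
   "mdeg w = mdeg u1 + mdeg v1" "betw (u1 X + v1 X) (w X) (u2 X + v2 X)"
  shows "\<exists>u\<in>I. \<exists>v\<in>J. w = mmult u v"
proof (cases "u1 X + v1 X \<le> w X \<and> w X \<le> u2 X + v2 X")
  case True
  then show ?thesis using base_ord[OF assms(1,2,3,4,5,6,7,8,9)] by blast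
next
  case False
  then have "u2 X + v2 X \<le> w X \<and> w X \<le> u1 X + v1 X" using assms(10) unfolding betw_def by auto
  moreover have "mdeg w = mdeg u2 + mdeg v2" using assms by auto
  ultimately show ?thesis using base_ord[OF assms(1,2,5,6,3,4) assms(7,8)[symmetric], where w=w and g="u1 X + v1 X - w X"] by blast
qed

lemma chain:
  assumes mI: "mon_ideal I" and mJ: "mon_ideal J" and sI: "stepX I" and sJ: "stepX J"
  shows "d = (mdeg u1 - mdeg u2) + (mdeg u2 - mdeg u1) \<Longrightarrow> u1\<in>I \<Longrightarrow> v1\<in>J \<Longrightarrow> u2\<in>I \<Longrightarrow> v2\<in>J
   \<Longrightarrow> mdeg w = mdeg u1 + mdeg v1 \<Longrightarrow> mdeg w = mdeg u2 + mdeg v2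
   \<Longrightarrow> betw (u1 X + v1 X) (w X) (u2 X + v2 X)
   \<Longrightarrow> \<exists>u\<in>I. \<exists>v\<in>J. w = mmult u v"
proof (induction d arbitrary: u1 v1 u2 v2 rule: less_induct)
  case (less d)
  consider "mdeg u1 = mdeg u2" | "mdeg u1 < mdeg u2" | "mdeg u2 < mdeg u1" by linarith
  then show ?case
  proof cases
    case 1
    then show ?thesis using base[OF sI sJ] less.prems by auto
  next
    case 2
    define v' where "v' = v2(Y := v2 Y + (mdeg v1 - 1 - mdeg v2))"
    have "mdvd v2 v'" unfolding v'_def mdvd_def by auto
    then have v'J: "v' \<in> J" using mJ less.prems unfolding mon_ideal_def by auto
    have dv': "mdeg v' = mdeg v1 - 1" using 2 less.prems unfolding v'_def mdeg_def by auto
    have a1: "mulvar X u1 \<in> I" using mI less.prems unfolding mon_ideal_def mdvd_def mulvar_def by auto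
    have a2: "mulvar X v' \<in> J" using mJ v'J unfolding mon_ideal_def mdvd_def mulvar_def by auto
    have dm: "\<And>u. mdeg (mulvar X u) = mdeg u + 1" unfolding mdeg_def mulvar_def by auto
    have mx: "\<And>u. mulvar X u X = u X + 1" unfolding mulvar_def by auto
    have "betw (u1 X + v1 X) (w X) (u1 X + mulvar X v' X) \<or>
          betw (mulvar X u1 X + v' X) (w X) (u2 X + v2 X)"
      using less.prems(8) unfolding betw_def mx by auto
    then show ?thesis
    proof
      assume b: "betw (u1 X + v1 X) (w X) (u1 X + mulvar X v' X)"
      show ?thesis
        apply (rule less.IH[of 0 u1 u1 v1 "mulvar X v'"])
        using 2 less.prems a2 b dm dv' by auto
    next
      assume b: "betw (mulvar X u1 X + v' X) (w X) (u2 X + v2 X)"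
      show ?thesis
        apply (rule less.IH[of "d - 1" "mulvar X u1" u2 v' v2])
        using 2 less.prems a1 v'J b dm dv' by auto
    qed
  next
    case 3
    define u' where "u' = u2(Y := u2 Y + (mdeg u1 - 1 - mdeg u2))"
    have "mdvd u2 u'" unfolding u'_def mdvd_def by auto
    then have u'I: "u' \<in> I" using mI less.prems unfolding mon_ideal_def by auto
    have du': "mdeg u' = mdeg u1 - 1" using 3 less.prems unfolding u'_def mdeg_def by auto
    have a1: "mulvar X u' \<in> I" using mI u'I unfolding mon_ideal_def mdvd_def mulvar_def by auto
    have a2: "mulvar X v1 \<in> J" using mJ less.prems unfolding mon_ideal_def mdvd_def mulvar_def by auto
    have dm: "\<And>u. mdeg (mulvar X u) = mdeg u + 1" unfolding mdeg_def mulvar_def by auto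
    have mx: "\<And>u. mulvar X u X = u X + 1" unfolding mulvar_def by auto
    have "betw (u1 X + v1 X) (w X) (mulvar X u' X + v1 X) \<or>
          betw (u' X + mulvar X v1 X) (w X) (u2 X + v2 X)"
      using less.prems(8) unfolding betw_def mx by auto
    then show ?thesis
    proof
      assume b: "betw (u1 X + v1 X) (w X) (mulvar X u' X + v1 X)"
      show ?thesis
        apply (rule less.IH[of 0 u1 "mulvar X u'" v1 v1])
        using 3 less.prems a1 b dm du' by auto
    next
      assume b: "betw (u' X + mulvar X v1 X) (w X) (u2 X + v2 X)"
      show ?thesis
        apply (rule less.IH[of "d - 1" u' u2 "mulvar X v1" v2])
        using 3 less.prems a2 u'I b dm du' by auto
    qed
  qed
qed

lemma main:
  assumes mI: "mon_ideal I" and mJ: "mon_ideal J" and cI: "cw_polymatroidal I" and cJ: "cw_polymatroidal J"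
  shows "cw_polymatroidal (mprod I J)"
proof (rule convX_cw)
  have sI: "stepX I" and sJ: "stepX J" using cI cJ cw_stepX by auto
  show "convX (mprod I J)" unfolding convX_def
  proof (intro ballI allI impI)
    fix w1 w2 w assume w1: "w1 \<in> mprod I J" and w2: "w2 \<in> mprod I J"
      and d: "mdeg w1 = mdeg w" "mdeg w2 = mdeg w" and b: "betw (w1 X) (w X) (w2 X)"
    obtain u1 v1 where 1: "u1 \<in> I" "v1 \<in> J" "w1 = mmult u1 v1" using w1 mprod_char[OF mI] by auto
    obtain u2 v2 where 2: "u2 \<in> I" "v2 \<in> J" "w2 = mmult u2 v2" using w2 mprod_char[OF mI] by auto
    have "\<exists>u\<in>I. \<exists>v\<in>J. w = mmult u v"
      apply (rule chain[OF mI mJ sI sJ, of "(mdeg u1 - mdeg u2) + (mdeg u2 - mdeg u1)" u1 u2 v1 v2])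
      using 1 2 d b by (auto simp: mdeg_def mmult_def)
    then show "w \<in> mprod I J" using mprod_char[OF mI] by auto
  qed
qed

lemma mpow_props: "mon_ideal I \<Longrightarrow> cw_polymatroidal I \<Longrightarrow>
   mon_ideal (mpow I n) \<and> cw_polymatroidal (mpow I n)"
proof (induction n)
  case 0
  have "convX UNIV" unfolding convX_def by auto
  then show ?case using convX_cw unfolding mon_ideal_def by auto
next
  case (Suc n)
  then show ?case using main mprod_ideal by auto
qed

theorem corollary2p13:
  assumes "mon_ideal I" and "mon_ideal J"
    and "cw_polymatroidal I" and "cw_polymatroidal J"
  shows "cw_polymatroidal (mprod I J) \<and> (\<forall>n. cw_polymatroidal (mpow I n))"
  using main[OF assms] mpow_props[OF assms(1,3)] by auto

end
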